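(* Let $\mathcal{M}_1=(E_1,\rho_1)$ and $\mathcal{M}_2=(E_2,\rho_2)$ be $q$-matroids and let $\mathcal{M}_1\oplus\mathcal{M}_2$ be their direct sum on $E=E_1\oplus E_2$. Then \[ \mathcal{Z}(\mathcal{M}_1\oplus\mathcal{M}_2)=\{Z_1\oplus Z_2\mid Z_1\in\mathcal{Z}(\mathcal{M}_1),\ Z_2\in\mathcal{Z}(\mathcal{M}_2)\}. \]
   Context: Let $\mathbb{F}=\mathbb{F}_q$ be a finite field. For a finite-dimensional $\mathbb{F}$-vector space $E$, $\mathcal{L}(E)$ is the lattice of its subspaces. A $q$-matroid is a pair $\mathcal{M}=(E,\rho)$ with $\rho:\mathcal{L}(E)\to\mathbb{Z}_{\ge0}$ such that $0\le\rho(V)\le\dim V$, $V\le W\Rightarrow\rho(V)\le\rho(W)$, and $\rho(V+W)+\rho(V\cap W)\le\rho(V)+\rho(W)$ for all $V,W$. A subspace $F$ is a flat if $\rho(F+\langle x\rangle)>\rho(F)$ for all $x\in E\setminus F$. The cyclic core of $V$ is $\mathrm{cyc}(V)=\{x\in V\mid \rho(W)=\rho(V)\text{ for all }W\le V\text{ with }W+\langle x\rangle=V\}$ (a subspace); $V$ is cyclic if $\mathrm{cyc}(V)=V$. $\mathcal{Z}(\mathcal{M})$ denotes the set of cyclic flats (subspaces that are both flats and cyclic). Direct sum: given $q$-matroids $\mathcal{M}_i=(E_i,\rho_i)$, $i=1,2$, let $E=E_1\oplus E_2$ (each $E_i$ identified with its image in $E$) with projections $\pi_i:E\to E_i$; the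 direct sum $\mathcal{M}_1\oplus\mathcal{M}_2=(E,\rho)$ is the $q$-matroid with $\rho(V)=\dim V+\min_{X\le V}\big(\rho_1(\pi_1(X))+\rho_2(\pi_2(X))-\dim X\big)$. *)

theory Defs
  imports "HOL-Analysis.Analysis"
begin

text \<open>Finite-dimensional vector spaces over a finite field 'a are modelled as subspaces E
  of the coordinate space 'a^'n (every finite-dimensional space, including the zero space,
  embeds in such a space).\<close>

definition qsub :: "('a::field ^ 'n) set \<Rightarrow> ('a ^ 'n) set \<Rightarrow> bool" where
  "qsub E V \<longleftrightarrow> vec.subspace V \<and> V \<subseteq> E"

definition ssum :: "('a::field ^ 'n) set \<Rightarrow> ('a ^ 'n) set \<Rightarrow> ('a ^ 'n) set" where
  "ssum V W = {v + w | v w. v \<in> V \<and> w \<in> W}"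

definition qmatroid :: "('a::field ^ 'n) set \<Rightarrow> (('a ^ 'n) set \<Rightarrow> nat) \<Rightarrow> bool" where
  "qmatroid E \<rho> \<longleftrightarrow> vec.subspace E
     \<and> (\<forall>V. qsub E V \<longrightarrow> \<rho> V \<le> vec.dim V)
     \<and> (\<forall>V W. qsub E V \<and> qsub E W \<and> V \<subseteq> W \<longrightarrow> \<rho> V \<le> \<rho> W)
     \<and> (\<forall>V W. qsub E V \<and> qsub E W \<longrightarrow>
            \<rho> (ssum V W) + \<rho> (V \<inter> W) \<le> \<rho> V + \<rho> W)"

definition qflat :: "('a::field ^ 'n) set \<Rightarrow> (('a ^ 'n) set \<Rightarrow> nat) \<Rightarrow> ('a ^ 'n) set \<Rightarrow> bool" where
  "qflat E \<rho> F \<longleftrightarrow> qsub E F \<and> (\<forall>x \<in> E - F. \<rho> (vec.span (insert x F)) > \<rho> F)"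

definition cyc :: "(('a::field ^ 'n) set \<Rightarrow> nat) \<Rightarrow> ('a ^ 'n) set \<Rightarrow> ('a ^ 'n) set" where
  "cyc \<rho> V = {x \<in> V. \<forall>W. vec.subspace W \<and> W \<subseteq> V \<and> vec.span (insert x W) = V \<longrightarrow> \<rho> W = \<rho> V}"

definition qcyclic :: "(('a::field ^ 'n) set \<Rightarrow> nat) \<Rightarrow> ('a ^ 'n) set \<Rightarrow> bool" where
  "qcyclic \<rho> V \<longleftrightarrow> cyc \<rho> V = V"

definition cyclic_flats :: "('a::field ^ 'n) set \<Rightarrow> (('a ^ 'n) set \<Rightarrow> nat) \<Rightarrow> ('a ^ 'n) set set" where
  "cyclic_flats E \<rho> = {Z. qflat E \<rho> Z \<and> qcyclic \<rho> Z}"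

definition proj1 :: "'a ^ ('n1::finite + 'n2::finite) \<Rightarrow> 'a ^ 'n1" where
  "proj1 x = (\<chi> i. x $ Inl i)"
definition proj2 :: "'a ^ ('n1::finite + 'n2::finite) \<Rightarrow> 'a ^ 'n2" where
  "proj2 x = (\<chi> i. x $ Inr i)"
definition emb1 :: "'a::zero ^ 'n1 \<Rightarrow> 'a ^ ('n1::finite + 'n2::finite)" where
  "emb1 y = (\<chi> j. case j of Inl i \<Rightarrow> y $ i | Inr _ \<Rightarrow> 0)"
definition emb2 :: "'a::zero ^ 'n2 \<Rightarrow> 'a ^ ('n1::finite + 'n2::finite)" where
  "emb2 y = (\<chi> j. case j of Inl _ \<Rightarrow> 0 | Inr i \<Rightarrow> y $ i)"

definition dsum_space :: "('a::field ^ 'n1) set \<Rightarrow> ('a ^ 'n2) set \<Rightarrow> ('a ^ ('n1::finite + 'n2::finite)) set" where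
  "dsum_space V1 V2 = {emb1 a + emb2 b | a b. a \<in> V1 \<and> b \<in> V2}"

definition dsum_rank :: "(('a::{field,finite} ^ 'n1) set \<Rightarrow> nat) \<Rightarrow> (('a ^ 'n2) set \<Rightarrow> nat)
    \<Rightarrow> ('a ^ ('n1 + 'n2)) set \<Rightarrow> nat" where
  "dsum_rank \<rho>1 \<rho>2 V = nat (int (vec.dim V) +
     Min ((\<lambda>X. int (\<rho>1 (proj1 ` X)) + int (\<rho>2 (proj2 ` X)) - int (vec.dim X))
          ` {X. vec.subspace X \<and> X \<subseteq> V}))"

end

theory Submission
  imports Defs
begin

section \<open>Generic vector space facts\<close>

lemma span_sub[simp]: "vec.subspace S \<Longrightarrow> vec.span S = S"
  using vec.span_eq_iff by blast

lemma span_insert_sub: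
  fixes Z :: "('a::field ^ 'n) set"
  assumes "vec.subspace Z"
  shows "vec.span (insert x Z) = {c *s x + z | c z. z \<in> Z}"
proof -
  have Z: "vec.span Z = Z" using assms by simp
  show ?thesis unfolding vec.span_insert Z
  proof (intro set_eqI iffI)
    fix y assume "y \<in> {x'. \<exists>k. x' - k *s x \<in> Z}"
    then obtain k where k: "y - k *s x \<in> Z" by blast
    have "y = k *s x + (y - k *s x)" by simp
    then show "y \<in> {c *s x + z | c z. z \<in> Z}" using k by blast
  next
    fix y assume "y \<in> {c *s x + z | c z. z \<in> Z}"
    then obtain c z where "y = c *s x + z" "z \<in> Z" by blast
    then show "y \<in> {x'. \<exists>k. x' - k *s x \<in> Z}" by (intro CollectI exI[of _ c]) simp
  qed
qed

lemma dim_span_insert: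
  fixes H :: "('a::field ^ 'n) set"
  assumes "vec.subspace H" "x \<notin> H"
  shows "vec.dim (vec.span (insert x H)) = vec.dim H + 1"
  using assms by (simp add: vec.dim_insert)

lemma dim_span_insert_le:
  fixes H :: "('a::field ^ 'n) set"
  shows "vec.dim (vec.span (insert x H)) \<le> vec.dim H + 1"
  by (simp add: vec.dim_insert)

lemma hyp_exists:
  fixes A Z :: "('a::{field,finite} ^ 'n) set"
  assumes "vec.subspace A" "vec.subspace Z" "A \<subseteq> Z" "x \<in> Z" "x \<notin> A"
  shows "\<exists>H. vec.subspace H \<and> A \<subseteq> H \<and> H \<subseteq> Z \<and> x \<notin> H \<and> vec.span (insert x H) = Z"
  using assms
proof (induct "card (Z - A)" arbitrary: A rule: less_induct)
  case less
  have sub: "vec.span (insert x A) \<subseteq> Z"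
    using less.prems by (intro vec.span_minimal) auto
  show ?case
  proof (cases "vec.span (insert x A) = Z")
    case True
    then show ?thesis using less.prems by blast
  next
    case False
    then obtain z where z: "z \<in> Z" "z \<notin> vec.span (insert x A)" using sub by blast
    define A' where "A' = vec.span (insert z A)"
    have zA: "z \<notin> A" using z(2) vec.span_superset by blast
    have sA': "vec.subspace A'" unfolding A'_def by (rule vec.subspace_span)
    have AA': "A \<subseteq> A'" unfolding A'_def using vec.span_superset by blast
    have A'Z: "A' \<subseteq> Z" unfolding A'_def using less.prems z by (intro vec.span_minimal) auto
    have xA': "x \<notin> A'"
    proof
      assume "x \<in> A'"
      moreover have "x \<notin> vec.span A" using less.prems by simp
      ultimately have "z \<in> vec.span (insert x A)" unfolding A'_def by (rule vec.in_span_insert)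
      with z show False by blast
    qed
    have "Z - A' \<subset> Z - A" using AA' z zA vec.span_superset unfolding A'_def by blast
    then have "card (Z - A') < card (Z - A)" by (intro psubset_card_mono) auto
    from less.hyps[OF this sA' less.prems(2) A'Z less.prems(4) xA'] AA'
    show ?thesis by blast
  qed
qed

section \<open>q-matroid facts\<close>

lemma qm_subspace: "qmatroid E \<rho> \<Longrightarrow> vec.subspace E" by (simp add: qmatroid_def)

lemma qm_mono: "qmatroid E \<rho> \<Longrightarrow> qsub E V \<Longrightarrow> qsub E W \<Longrightarrow> V \<subseteq> W \<Longrightarrow> \<rho> V \<le> \<rho> W"
  by (simp add: qmatroid_def)

lemma qm_dim: "qmatroid E \<rho> \<Longrightarrow> qsub E V \<Longrightarrow> \<rho> V \<le> vec.dim V"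
  by (simp add: qmatroid_def)

lemma qsub_span_insert:
  "vec.subspace E \<Longrightarrow> x \<in> E \<Longrightarrow> B \<subseteq> E \<Longrightarrow> qsub E (vec.span (insert x B))"
  unfolding qsub_def using vec.span_minimal[of "insert x B" E] by auto

lemma qm_step:
  fixes E :: "('a::field ^ 'n) set"
  assumes qm: "qmatroid E \<rho>" and B: "qsub E B" and x: "x \<in> E"
  shows "\<rho> (vec.span (insert x B)) \<le> \<rho> B + 1"
proof -
  have sE: "vec.subspace E" using qm qm_subspace by blast
  have sB: "vec.subspace B" "B \<subseteq> E" using B by (auto simp: qsub_def)
  have qx: "qsub E (vec.span {x})" using qsub_span_insert[OF sE x, of "{}"] by simp
  have qi: "qsub E (B \<inter> vec.span {x})" using sB qx by (auto simp: qsub_def intro: vec.subspace_inter)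
  have eq: "ssum B (vec.span {x}) = vec.span (insert x B)"
  proof -
    have "vec.span (insert x B) = vec.span (B \<union> {x})" by simp
    also have "\<dots> = ssum B (vec.span {x})" unfolding vec.span_Un ssum_def using sB by simp
    finally show ?thesis by simp
  qed
  have "\<rho> (ssum B (vec.span {x})) + \<rho> (B \<inter> vec.span {x}) \<le> \<rho> B + \<rho> (vec.span {x})"
    using qm B qx unfolding qmatroid_def by blast
  moreover have "\<rho> (vec.span {x}) \<le> 1"
  proof -
    have "\<rho> (vec.span {x}) \<le> vec.dim (vec.span {x})" using qm_dim[OF qm qx] .
    also have "\<dots> \<le> 1" using dim_span_insert_le[of x "{}"] by simp
    finally show ?thesis .
  qed
  ultimately show ?thesis using eq by simp
qed

lemma R1:
  fixes E :: "('a::{field,finite} ^ 'n) set"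
  assumes qm: "qmatroid E \<rho>" and A: "qsub E A" and B: "vec.subspace B" "B \<subseteq> A"
  shows "\<rho> A + vec.dim B \<le> \<rho> B + vec.dim A"
  using B
proof (induct "card (A - B)" arbitrary: B rule: less_induct)
  case less
  show ?case
  proof (cases "A = B")
    case True then show ?thesis by simp
  next
    case False
    then obtain x where x: "x \<in> A" "x \<notin> B" using less.prems by blast
    have sE: "vec.subspace E" using qm qm_subspace by blast
    have AE: "A \<subseteq> E" "vec.subspace A" using A by (auto simp: qsub_def)
    define B' where "B' = vec.span (insert x B)"
    have qB: "qsub E B" using less.prems AE by (auto simp: qsub_def)
    have sB': "vec.subspace B'" unfolding B'_def by (rule vec.subspace_span)
    have B'A: "B' \<subseteq> A" unfolding B'_def using less.prems x AE by (intro vec.span_minimal) auto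
    have BB': "B \<subseteq> B'" "x \<in> B'" unfolding B'_def by (auto intro: vec.span_base)
    have "A - B' \<subset> A - B" using BB' x by blast
    then have "card (A - B') < card (A - B)" by (intro psubset_card_mono) auto
    from less.hyps[OF this sB' B'A] have ih: "\<rho> A + vec.dim B' \<le> \<rho> B' + vec.dim A" .
    have "vec.dim B' = vec.dim B + 1" unfolding B'_def using dim_span_insert less.prems x by blast
    moreover have "\<rho> B' \<le> \<rho> B + 1" unfolding B'_def using qm_step[OF qm qB] x AE by blast
    ultimately show ?thesis using ih by linarith
  qed
qed

lemma R4:
  fixes E :: "('a::{field,finite} ^ 'n) set"
  assumes qm: "qmatroid E \<rho>" and Zf: "qflat E \<rho> Z" and A: "qsub E A" and y: "y \<in> E"
    and AZ: "A \<subseteq> vec.span (insert y Z)"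
  shows "\<rho> Z + vec.dim A \<le> \<rho> A + vec.dim Z"
proof -
  have sE: "vec.subspace E" using qm qm_subspace by blast
  have qZ: "qsub E Z" using Zf by (simp add: qflat_def)
  have sZ: "vec.subspace Z" "Z \<subseteq> E" using qZ by (auto simp: qsub_def)
  have sA: "vec.subspace A" "A \<subseteq> E" using A by (auto simp: qsub_def)
  show ?thesis
  proof (cases "A \<subseteq> Z")
    case True
    then show ?thesis using R1[OF qm qZ sA(1) True] by simp
  next
    case False
    then obtain a where a: "a \<in> A" "a \<notin> Z" by blast
    define S where "S = vec.span (A \<union> Z)"
    have qS: "qsub E S" unfolding S_def qsub_def using sA sZ sE vec.span_minimal[of "A \<union> Z" E]
      by auto
    have AS: "A \<subseteq> S" unfolding S_def using vec.span_superset by blast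
    have r1: "\<rho> S + vec.dim A \<le> \<rho> A + vec.dim S" using R1[OF qm qS sA(1) AS] .
    have "S \<subseteq> vec.span (insert y Z)" unfolding S_def using AZ
      by (intro vec.span_minimal) (auto intro: vec.span_base)
    then have "vec.dim S \<le> vec.dim (vec.span (insert y Z))" by (rule vec.dim_subset)
    also have "\<dots> \<le> vec.dim Z + 1" by (rule dim_span_insert_le)
    finally have dS: "vec.dim S \<le> vec.dim Z + 1" .
    have "\<rho> Z < \<rho> (vec.span (insert a Z))" using Zf a sA unfolding qflat_def by blast
    also have "\<dots> \<le> \<rho> S"
    proof (rule qm_mono[OF qm _ qS])
      show "qsub E (vec.span (insert a Z))" using qsub_span_insert[OF sE _ sZ(2)] a sA by blast
      show "vec.span (insert a Z) \<subseteq> S" unfolding S_def using a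
        by (intro vec.span_mono) auto
    qed
    finally show ?thesis using r1 dS by linarith
  qed
qed

lemma R3:
  fixes E :: "('a::{field,finite} ^ 'n) set"
  assumes qm: "qmatroid E \<rho>" and qZ: "qsub E Z" and cZ: "qcyclic \<rho> Z"
    and A: "vec.subspace A" "A \<subseteq> Z" "A \<noteq> Z"
  shows "\<rho> Z + vec.dim A + 1 \<le> \<rho> A + vec.dim Z"
proof -
  have sZ: "vec.subspace Z" "Z \<subseteq> E" using qZ by (auto simp: qsub_def)
  obtain x where x: "x \<in> Z" "x \<notin> A" using A by blast
  obtain H where H: "vec.subspace H" "A \<subseteq> H" "H \<subseteq> Z" "x \<notin> H" "vec.span (insert x H) = Z"
    using hyp_exists[OF A(1) sZ(1) A(2) x] by blast
  have "x \<in> cyc \<rho> Z" using cZ x unfolding qcyclic_def by simp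
  then have eq: "\<rho> H = \<rho> Z" using H unfolding cyc_def by blast
  have qH: "qsub E H" using H sZ by (auto simp: qsub_def)
  have r1: "\<rho> H + vec.dim A \<le> \<rho> A + vec.dim H" using R1[OF qm qH A(1) H(2)] .
  have "vec.dim Z = vec.dim H + 1" using dim_span_insert[OF H(1) H(4)] H(5) by simp
  then show ?thesis using r1 eq by linarith
qed

section \<open>Direct sum facts\<close>

lemma proj1_emb1[simp]: "proj1 (emb1 a :: 'a::zero^('n1::finite+'n2::finite)) = a"
  by (simp add: proj1_def emb1_def vec_eq_iff)
lemma proj2_emb2[simp]: "proj2 (emb2 a :: 'a::zero^('n1::finite+'n2::finite)) = a"
  by (simp add: proj2_def emb2_def vec_eq_iff)
lemma proj1_emb2[simp]: "proj1 (emb2 a :: 'a::zero^('n1::finite+'n2::finite)) = 0"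
  by (simp add: proj1_def emb2_def vec_eq_iff)
lemma proj2_emb1[simp]: "proj2 (emb1 a :: 'a::zero^('n1::finite+'n2::finite)) = 0"
  by (simp add: proj2_def emb1_def vec_eq_iff)
lemma proj1_add[simp]: "proj1 (x + y) = proj1 x + proj1 y"
  by (simp add: proj1_def vec_eq_iff)
lemma proj2_add[simp]: "proj2 (x + y) = proj2 x + proj2 y"
  by (simp add: proj2_def vec_eq_iff)
lemma proj1_scale[simp]: "proj1 (c *s x) = c *s proj1 x"
  by (simp add: proj1_def vec_eq_iff)
lemma proj2_scale[simp]: "proj2 (c *s x) = c *s proj2 x"
  by (simp add: proj2_def vec_eq_iff)
lemma proj1_zero[simp]: "proj1 0 = 0"
  by (simp add: proj1_def vec_eq_iff)
lemma proj2_zero[simp]: "proj2 0 = 0"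
  by (simp add: proj2_def vec_eq_iff)
lemma emb1_add[simp]: "(emb1 (x + y) :: 'a::monoid_add^('n1::finite+'n2::finite)) = emb1 x + emb1 y"
  by (simp add: emb1_def vec_eq_iff split: sum.splits)
lemma emb2_add[simp]: "(emb2 (x + y) :: 'a::monoid_add^('n1::finite+'n2::finite)) = emb2 x + emb2 y"
  by (simp add: emb2_def vec_eq_iff split: sum.splits)
lemma emb1_scale[simp]: "(emb1 (c *s x) :: 'a::field^('n1::finite+'n2::finite)) = c *s emb1 x"
  by (simp add: emb1_def vec_eq_iff split: sum.splits)
lemma emb2_scale[simp]: "(emb2 (c *s x) :: 'a::field^('n1::finite+'n2::finite)) = c *s emb2 x"
  by (simp add: emb2_def vec_eq_iff split: sum.splits)
lemma emb1_zero[simp]: "(emb1 0 :: 'a::zero^('n1::finite+'n2::finite)) = 0"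
  by (simp add: emb1_def vec_eq_iff split: sum.splits)
lemma emb2_zero[simp]: "(emb2 0 :: 'a::zero^('n1::finite+'n2::finite)) = 0"
  by (simp add: emb2_def vec_eq_iff split: sum.splits)
lemma decomp: "emb1 (proj1 x) + emb2 (proj2 x) = (x :: 'a::monoid_add^('n1::finite+'n2::finite))"
  by (simp add: emb1_def emb2_def proj1_def proj2_def vec_eq_iff split: sum.splits)

lemma lin_emb1: "Vector_Spaces.linear vector_scalar_mult vector_scalar_mult (emb1 :: 'a::field^'n1 \<Rightarrow> 'a^('n1::finite+'n2::finite))"
  unfolding Vector_Spaces.linear_def module_hom_iff
  by (auto simp: vec.vector_space_axioms vec.module_axioms)
lemma lin_emb2: "Vector_Spaces.linear vector_scalar_mult vector_scalar_mult (emb2 :: 'a::field^'n2 \<Rightarrow> 'a^('n1::finite+'n2::finite))"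
  unfolding Vector_Spaces.linear_def module_hom_iff
  by (auto simp: vec.vector_space_axioms vec.module_axioms)

lemma inj_emb1: "inj (emb1 :: 'a::zero^'n1 \<Rightarrow> 'a^('n1::finite+'n2::finite))"
  by (metis injI proj1_emb1)
lemma inj_emb2: "inj (emb2 :: 'a::zero^'n2 \<Rightarrow> 'a^('n1::finite+'n2::finite))"
  by (metis injI proj2_emb2)

lemma subspace_proj1:
  fixes X :: "('a::field^('n1::finite+'n2::finite)) set"
  assumes "vec.subspace X" shows "vec.subspace (proj1 ` X)"
  unfolding vec.subspace_def
proof (intro conjI ballI allI)
  show "0 \<in> proj1 ` X" using vec.subspace_0[OF assms] proj1_zero by (metis image_eqI)
next
  fix x y assume "x \<in> proj1 ` X" "y \<in> proj1 ` X"
  then obtain u v where "x = proj1 u" "y = proj1 v" "u \<in> X" "v \<in> X" by blast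
  then show "x + y \<in> proj1 ` X" using vec.subspace_add[OF assms] by (metis proj1_add image_eqI)
next
  fix c x assume "x \<in> proj1 ` X"
  then obtain u where "x = proj1 u" "u \<in> X" by blast
  then show "c *s x \<in> proj1 ` X" using vec.subspace_scale[OF assms] by (metis proj1_scale image_eqI)
qed

lemma subspace_proj2:
  fixes X :: "('a::field^('n1::finite+'n2::finite)) set"
  assumes "vec.subspace X" shows "vec.subspace (proj2 ` X)"
  unfolding vec.subspace_def
proof (intro conjI ballI allI)
  show "0 \<in> proj2 ` X" using vec.subspace_0[OF assms] proj2_zero by (metis image_eqI)
next
  fix x y assume "x \<in> proj2 ` X" "y \<in> proj2 ` X"
  then obtain u v where "x = proj2 u" "y = proj2 v" "u \<in> X" "v \<in> X" by blast
  then show "x + y \<in> proj2 ` X" using vec.subspace_add[OF assms] by (metis proj2_add image_eqI)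
next
  fix c x assume "x \<in> proj2 ` X"
  then obtain u where "x = proj2 u" "u \<in> X" by blast
  then show "c *s x \<in> proj2 ` X" using vec.subspace_scale[OF assms] by (metis proj2_scale image_eqI)
qed

lemma subspace_dsum:
  fixes A :: "('a::field^'n1) set" and B :: "('a^'n2) set"
  assumes "vec.subspace A" "vec.subspace B"
  shows "vec.subspace (dsum_space A B :: ('a^('n1::finite+'n2::finite)) set)"
  unfolding vec.subspace_def dsum_space_def
proof (intro conjI ballI allI)
  show "0 \<in> {emb1 a + emb2 b :: 'a^('n1+'n2) |a b. a \<in> A \<and> b \<in> B}"
    using assms vec.subspace_0 by (intro CollectI exI[of _ 0]) (simp add: vec.subspace_0)
next
  fix x y assume "x \<in> {emb1 a + emb2 b :: 'a^('n1+'n2) |a b. a \<in> A \<and> b \<in> B}"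
    "y \<in> {emb1 a + emb2 b :: 'a^('n1+'n2) |a b. a \<in> A \<and> b \<in> B}"
  then obtain a b a' b' where "x = emb1 a + emb2 b" "y = emb1 a' + emb2 b'" "a \<in> A" "b \<in> B" "a' \<in> A" "b' \<in> B"
    by blast
  then show "x + y \<in> {emb1 a + emb2 b :: 'a^('n1+'n2) |a b. a \<in> A \<and> b \<in> B}"
    using assms vec.subspace_add
    by (intro CollectI exI[of _ "a + a'"] exI[of _ "b + b'"]) (simp add: algebra_simps vec.subspace_add)
next
  fix c x assume "x \<in> {emb1 a + emb2 b :: 'a^('n1+'n2) |a b. a \<in> A \<and> b \<in> B}"
  then obtain a b where "x = emb1 a + emb2 b" "a \<in> A" "b \<in> B" by blast
  then show "c *s x \<in> {emb1 a + emb2 b :: 'a^('n1+'n2) |a b. a \<in> A \<and> b \<in> B}"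
    using assms vec.subspace_scale
    by (intro CollectI exI[of _ "c *s a"] exI[of _ "c *s b"]) (simp add: vec.scale_right_distrib vec.subspace_scale)
qed

lemma proj1_dsum: "0 \<in> B \<Longrightarrow> proj1 ` (dsum_space A B :: ('a::field^('n1::finite+'n2::finite)) set) = A"
  unfolding dsum_space_def by (auto simp: image_iff) (metis add.right_neutral emb2_zero proj1_add proj1_emb1 proj1_emb2)

lemma proj2_dsum: "0 \<in> A \<Longrightarrow> proj2 ` (dsum_space A B :: ('a::field^('n1::finite+'n2::finite)) set) = B"
  unfolding dsum_space_def by (auto simp: image_iff) (metis add.left_neutral emb1_zero proj2_add proj2_emb1 proj2_emb2)

lemma dsum_mono: "A \<subseteq> A' \<Longrightarrow> B \<subseteq> B' \<Longrightarrow> dsum_space A B \<subseteq> dsum_space A' B'"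
  unfolding dsum_space_def by blast

lemma sub_dsum_proj: "(X :: ('a::field^('n1::finite+'n2::finite)) set) \<subseteq> dsum_space (proj1 ` X) (proj2 ` X)"
  unfolding dsum_space_def
proof
  fix x assume "x \<in> X"
  then show "x \<in> {emb1 a + emb2 b |a b. a \<in> proj1 ` X \<and> b \<in> proj2 ` X}"
    using decomp[of x] by (intro CollectI exI[of _ "proj1 x"] exI[of _ "proj2 x"]) auto
qed

lemma dim_dsum:
  fixes A :: "('a::field^'n1) set" and B :: "('a^'n2) set"
  assumes "vec.subspace A" "vec.subspace B"
  shows "vec.dim (dsum_space A B :: ('a^('n1::finite+'n2::finite)) set) = vec.dim A + vec.dim B"
proof -
  let ?A = "emb1 ` A :: ('a^('n1+'n2)) set" and ?B = "emb2 ` B :: ('a^('n1+'n2)) set"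
  have sA: "vec.subspace ?A" using vec.linear_subspace_image[OF lin_emb1 assms(1)] .
  have sB: "vec.subspace ?B" using vec.linear_subspace_image[OF lin_emb2 assms(2)] .
  have eq: "dsum_space A B = {x + y |x y. x \<in> ?A \<and> y \<in> ?B}" unfolding dsum_space_def by blast
  have int: "?A \<inter> ?B \<subseteq> {0}"
  proof
    fix v assume "v \<in> ?A \<inter> ?B"
    then obtain a b where "v = emb1 a" "v = emb2 b" by blast
    then have "a = 0" by (metis proj1_emb1 proj1_emb2)
    then show "v \<in> {0}" using \<open>v = emb1 a\<close> by simp
  qed
  have d0: "vec.dim (?A \<inter> ?B) = 0"
    using vec.dim_subset[OF int] vec.dim_insert[of 0 "{}"] by simp
  have dA: "vec.dim ?A = vec.dim A" using vec.dim_image_eq[OF lin_emb1] inj_emb1 by (metis inj_on_subset subset_UNIV)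
  have dB: "vec.dim ?B = vec.dim B" using vec.dim_image_eq[OF lin_emb2] inj_emb2 by (metis inj_on_subset subset_UNIV)
  show ?thesis using vec.dim_sums_Int[OF sA sB] eq d0 dA dB by simp
qed

lemma dim_le_proj:
  fixes X :: "('a::field^('n1::finite+'n2::finite)) set"
  assumes "vec.subspace X"
  shows "vec.dim X \<le> vec.dim (proj1 ` X) + vec.dim (proj2 ` X)"
  using vec.dim_subset[OF sub_dsum_proj[of X]] dim_dsum[OF subspace_proj1[OF assms] subspace_proj2[OF assms]]
  by simp

lemma proj1_span_insert:
  fixes Z :: "('a::field^('n1::finite+'n2::finite)) set"
  assumes "vec.subspace Z"
  shows "proj1 ` vec.span (insert x Z) \<subseteq> vec.span (insert (proj1 x) (proj1 ` Z))"
proof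
  fix y assume "y \<in> proj1 ` vec.span (insert x Z)"
  then obtain w where "y = proj1 w" "w \<in> vec.span (insert x Z)" by blast
  then obtain c z where y: "y = proj1 (c *s x + z)" "z \<in> Z" unfolding span_insert_sub[OF assms] by blast
  have "proj1 x \<in> vec.span (insert (proj1 x) (proj1 ` Z))" by (auto intro: vec.span_base)
  moreover have "proj1 z \<in> vec.span (insert (proj1 x) (proj1 ` Z))" using y by (auto intro: vec.span_base)
  ultimately show "y \<in> vec.span (insert (proj1 x) (proj1 ` Z))" using y
    by (simp add: vec.span_add vec.span_scale)
qed

lemma proj2_span_insert:
  fixes Z :: "('a::field^('n1::finite+'n2::finite)) set"
  assumes "vec.subspace Z"
  shows "proj2 ` vec.span (insert x Z) \<subseteq> vec.span (insert (proj2 x) (proj2 ` Z))"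
proof
  fix y assume "y \<in> proj2 ` vec.span (insert x Z)"
  then obtain w where "y = proj2 w" "w \<in> vec.span (insert x Z)" by blast
  then obtain c z where y: "y = proj2 (c *s x + z)" "z \<in> Z" unfolding span_insert_sub[OF assms] by blast
  have "proj2 x \<in> vec.span (insert (proj2 x) (proj2 ` Z))" by (auto intro: vec.span_base)
  moreover have "proj2 z \<in> vec.span (insert (proj2 x) (proj2 ` Z))" using y by (auto intro: vec.span_base)
  ultimately show "y \<in> vec.span (insert (proj2 x) (proj2 ` Z))" using y
    by (simp add: vec.span_add vec.span_scale)
qed

section \<open>Direct sum rank\<close>

definition dval :: "(('a::{field,finite}^'n1) set \<Rightarrow> nat) \<Rightarrow> (('a^'n2) set \<Rightarrow> nat)
    \<Rightarrow> ('a^('n1+'n2)) set \<Rightarrow> ('a^('n1+'n2)) set \<Rightarrow> int" where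
  "dval \<rho>1 \<rho>2 V X = int (vec.dim V) + int (\<rho>1 (proj1 ` X)) + int (\<rho>2 (proj2 ` X)) - int (vec.dim X)"

lemma dval_nonneg: "X \<subseteq> V \<Longrightarrow> 0 \<le> dval \<rho>1 \<rho>2 V X"
  unfolding dval_def using vec.dim_subset[of X V] by linarith

lemma DR_le:
  assumes "vec.subspace X" "X \<subseteq> V"
  shows "int (dsum_rank \<rho>1 \<rho>2 V) \<le> dval \<rho>1 \<rho>2 V X"
proof -
  let ?f = "\<lambda>X. int (\<rho>1 (proj1 ` X)) + int (\<rho>2 (proj2 ` X)) - int (vec.dim X)"
  let ?S = "?f ` {X. vec.subspace X \<and> X \<subseteq> V}"
  have fin: "finite ?S" by simp
  have "?f X \<in> ?S" using assms by blast
  then have "Min ?S \<le> ?f X" using fin by simp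
  then have "int (vec.dim V) + Min ?S \<le> dval \<rho>1 \<rho>2 V X" unfolding dval_def by linarith
  moreover have "0 \<le> dval \<rho>1 \<rho>2 V X" using dval_nonneg[OF assms(2)] .
  ultimately show ?thesis unfolding dsum_rank_def by linarith
qed

lemma DR_att:
  assumes "vec.subspace V"
  shows "\<exists>X. vec.subspace X \<and> X \<subseteq> V \<and> int (dsum_rank \<rho>1 \<rho>2 V) = dval \<rho>1 \<rho>2 V X"
proof -
  let ?f = "\<lambda>X. int (\<rho>1 (proj1 ` X)) + int (\<rho>2 (proj2 ` X)) - int (vec.dim X)"
  let ?S = "?f ` {X. vec.subspace X \<and> X \<subseteq> V}"
  have fin: "finite ?S" by simp
  have ne: "?S \<noteq> {}" using assms by blast
  have "Min ?S \<in> ?S" using Min_in[OF fin ne] .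
  then obtain X where X: "vec.subspace X" "X \<subseteq> V" "Min ?S = ?f X" by auto
  have "0 \<le> dval \<rho>1 \<rho>2 V X" using dval_nonneg[OF X(2)] .
  then have "int (dsum_rank \<rho>1 \<rho>2 V) = dval \<rho>1 \<rho>2 V X"
    unfolding dsum_rank_def X(3) unfolding dval_def by linarith
  then show ?thesis using X by blast
qed

lemma dir1:
  fixes E1 :: "('a::{field,finite} ^ 'n1) set" and E2 :: "('a ^ 'n2) set"
    and \<rho>1 :: "('a ^ 'n1) set \<Rightarrow> nat" and \<rho>2 :: "('a ^ 'n2) set \<Rightarrow> nat"
  assumes qm1: "qmatroid E1 \<rho>1" and qm2: "qmatroid E2 \<rho>2"
    and Zc: "Z \<in> cyclic_flats (dsum_space E1 E2) (dsum_rank \<rho>1 \<rho>2)"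
  shows "\<exists>Z1 Z2. Z = dsum_space Z1 Z2 \<and> Z1 \<in> cyclic_flats E1 \<rho>1 \<and> Z2 \<in> cyclic_flats E2 \<rho>2"
proof -
  let ?E = "dsum_space E1 E2 :: ('a^('n1+'n2)) set" and ?\<rho> = "dsum_rank \<rho>1 \<rho>2"
  have sE1: "vec.subspace E1" using qm1 qm_subspace by blast
  have sE2: "vec.subspace E2" using qm2 qm_subspace by blast
  have qZ: "qsub ?E Z" and fl: "\<forall>x \<in> ?E - Z. ?\<rho> (vec.span (insert x Z)) > ?\<rho> Z"
    and cy: "cyc ?\<rho> Z = Z"
    using Zc unfolding cyclic_flats_def qflat_def qcyclic_def by auto
  have sZ: "vec.subspace Z" and ZE: "Z \<subseteq> ?E" using qZ by (auto simp: qsub_def)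
  define Z1 where "Z1 = proj1 ` Z"
  define Z2 where "Z2 = proj2 ` Z"
  have sZ1: "vec.subspace Z1" unfolding Z1_def using subspace_proj1[OF sZ] .
  have sZ2: "vec.subspace Z2" unfolding Z2_def using subspace_proj2[OF sZ] .
  have Z1E1: "Z1 \<subseteq> E1" unfolding Z1_def
    using image_mono[OF ZE, of proj1] proj1_dsum[of E2 E1] vec.subspace_0[OF sE2] by auto
  have Z2E2: "Z2 \<subseteq> E2" unfolding Z2_def
    using image_mono[OF ZE, of proj2] proj2_dsum[of E1 E2] vec.subspace_0[OF sE1] by auto
  have qZ1: "qsub E1 Z1" using sZ1 Z1E1 by (simp add: qsub_def)
  have qZ2: "qsub E2 Z2" using sZ2 Z2E2 by (simp add: qsub_def)
  obtain X where X: "vec.subspace X" "X \<subseteq> Z" "int (?\<rho> Z) = dval \<rho>1 \<rho>2 Z X"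
    using DR_att[OF sZ] by blast
  have XZ: "X = Z"
  proof (rule ccontr)
    assume "X \<noteq> Z"
    then obtain x where x: "x \<in> Z" "x \<notin> X" using X by blast
    obtain H where H: "vec.subspace H" "X \<subseteq> H" "H \<subseteq> Z" "x \<notin> H" "vec.span (insert x H) = Z"
      using hyp_exists[OF X(1) sZ X(2) x] by blast
    have "x \<in> cyc ?\<rho> Z" using cy x by simp
    then have eq: "?\<rho> H = ?\<rho> Z" using H unfolding cyc_def by blast
    have dZ: "vec.dim Z = vec.dim H + 1" using dim_span_insert[OF H(1) H(4)] H(5) by simp
    have "int (?\<rho> H) \<le> dval \<rho>1 \<rho>2 H X" using DR_le[OF X(1) H(2)] .
    moreover have "dval \<rho>1 \<rho>2 H X = dval \<rho>1 \<rho>2 Z X - 1" using dZ by (simp add: dval_def)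
    ultimately show False using eq X(3) by simp
  qed
  have rZ: "int (?\<rho> Z) = int (\<rho>1 Z1) + int (\<rho>2 Z2)"
    using X XZ by (simp add: dval_def Z1_def Z2_def)
  have Zsub: "Z \<subseteq> dsum_space Z1 Z2" using sub_dsum_proj unfolding Z1_def Z2_def by blast
  have sD: "vec.subspace (dsum_space Z1 Z2 :: ('a^('n1+'n2)) set)" using subspace_dsum[OF sZ1 sZ2] .
  have Zeq: "Z = dsum_space Z1 Z2"
  proof (rule ccontr)
    assume "Z \<noteq> dsum_space Z1 Z2"
    then obtain y where y: "y \<in> dsum_space Z1 Z2" "y \<notin> Z" using Zsub by blast
    have yE: "y \<in> ?E" using y dsum_mono[OF Z1E1 Z2E2] by blast
    define S where "S = vec.span (insert y Z)"
    have gt: "?\<rho> Z < ?\<rho> S" using fl y yE unfolding S_def by blast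
    have sS: "vec.subspace S" unfolding S_def by (rule vec.subspace_span)
    have SD: "S \<subseteq> dsum_space Z1 Z2" unfolding S_def using sD y Zsub
      by (intro vec.span_minimal) auto
    have ZS: "Z \<subseteq> S" unfolding S_def by (auto intro: vec.span_base)
    have p1: "proj1 ` S = Z1"
      using image_mono[OF SD, of proj1] proj1_dsum[of Z2 Z1] vec.subspace_0[OF sZ2]
        image_mono[OF ZS, of proj1] unfolding Z1_def by auto
    have p2: "proj2 ` S = Z2"
      using image_mono[OF SD, of proj2] proj2_dsum[of Z1 Z2] vec.subspace_0[OF sZ1]
        image_mono[OF ZS, of proj2] unfolding Z2_def by auto
    have "int (?\<rho> S) \<le> dval \<rho>1 \<rho>2 S S" using DR_le[OF sS order_refl] .
    then have "int (?\<rho> S) \<le> int (\<rho>1 Z1) + int (\<rho>2 Z2)" by (simp add: dval_def p1 p2)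
    with rZ gt show False by linarith
  qed
  have p1Z: "proj1 ` Z = Z1" and p2Z: "proj2 ` Z = Z2" unfolding Z1_def Z2_def by simp_all
  have f1: "qflat E1 \<rho>1 Z1"
    unfolding qflat_def
  proof (intro conjI ballI)
    show "qsub E1 Z1" by fact
    fix y assume y: "y \<in> E1 - Z1"
    let ?w = "emb1 y :: 'a^('n1+'n2)"
    have wE: "?w \<in> ?E" unfolding dsum_space_def using y vec.subspace_0[OF sE2]
      by (intro CollectI exI[of _ y] exI[of _ 0]) simp
    have wZ: "?w \<notin> Z"
    proof
      assume "?w \<in> Z"
      then have "proj1 ?w \<in> Z1" unfolding Z1_def by blast
      then show False using y by simp
    qed
    define S where "S = vec.span (insert ?w Z)"
    have gt: "?\<rho> Z < ?\<rho> S" using fl wE wZ unfolding S_def by blast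
    have sS: "vec.subspace S" unfolding S_def by (rule vec.subspace_span)
    have pp1: "proj1 ` S \<subseteq> vec.span (insert y Z1)"
      using proj1_span_insert[OF sZ, of ?w] unfolding S_def p1Z by simp
    have pp2: "proj2 ` S \<subseteq> Z2"
      using proj2_span_insert[OF sZ, of ?w] unfolding S_def p2Z using sZ2 by simp
    have qy: "qsub E1 (vec.span (insert y Z1))" using qsub_span_insert[OF sE1 _ Z1E1] y by blast
    have q1: "qsub E1 (proj1 ` S)" using subspace_proj1[OF sS] pp1 qy by (auto simp: qsub_def)
    have q2: "qsub E2 (proj2 ` S)" using subspace_proj2[OF sS] pp2 Z2E2 by (auto simp: qsub_def)
    have m1: "\<rho>1 (proj1 ` S) \<le> \<rho>1 (vec.span (insert y Z1))" using qm_mono[OF qm1 q1 qy pp1] .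
    have m2: "\<rho>2 (proj2 ` S) \<le> \<rho>2 Z2" using qm_mono[OF qm2 q2 qZ2 pp2] .
    have "int (?\<rho> S) \<le> dval \<rho>1 \<rho>2 S S" using DR_le[OF sS order_refl] .
    then have "int (?\<rho> S) \<le> int (\<rho>1 (proj1 ` S)) + int (\<rho>2 (proj2 ` S))" by (simp add: dval_def)
    then show "\<rho>1 Z1 < \<rho>1 (vec.span (insert y Z1))" using rZ gt m1 m2 by linarith
  qed
  have f2: "qflat E2 \<rho>2 Z2"
    unfolding qflat_def
  proof (intro conjI ballI)
    show "qsub E2 Z2" by fact
    fix y assume y: "y \<in> E2 - Z2"
    let ?w = "emb2 y :: 'a^('n1+'n2)"
    have wE: "?w \<in> ?E" unfolding dsum_space_def using y vec.subspace_0[OF sE1]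
      by (intro CollectI exI[of _ 0] exI[of _ y]) simp
    have wZ: "?w \<notin> Z"
    proof
      assume "?w \<in> Z"
      then have "proj2 ?w \<in> Z2" unfolding Z2_def by blast
      then show False using y by simp
    qed
    define S where "S = vec.span (insert ?w Z)"
    have gt: "?\<rho> Z < ?\<rho> S" using fl wE wZ unfolding S_def by blast
    have sS: "vec.subspace S" unfolding S_def by (rule vec.subspace_span)
    have pp2: "proj2 ` S \<subseteq> vec.span (insert y Z2)"
      using proj2_span_insert[OF sZ, of ?w] unfolding S_def p2Z by simp
    have pp1: "proj1 ` S \<subseteq> Z1"
      using proj1_span_insert[OF sZ, of ?w] unfolding S_def p1Z using sZ1 by simp
    have qy: "qsub E2 (vec.span (insert y Z2))" using qsub_span_insert[OF sE2 _ Z2E2] y by blast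
    have q2: "qsub E2 (proj2 ` S)" using subspace_proj2[OF sS] pp2 qy by (auto simp: qsub_def)
    have q1: "qsub E1 (proj1 ` S)" using subspace_proj1[OF sS] pp1 Z1E1 by (auto simp: qsub_def)
    have m2: "\<rho>2 (proj2 ` S) \<le> \<rho>2 (vec.span (insert y Z2))" using qm_mono[OF qm2 q2 qy pp2] .
    have m1: "\<rho>1 (proj1 ` S) \<le> \<rho>1 Z1" using qm_mono[OF qm1 q1 qZ1 pp1] .
    have "int (?\<rho> S) \<le> dval \<rho>1 \<rho>2 S S" using DR_le[OF sS order_refl] .
    then have "int (?\<rho> S) \<le> int (\<rho>1 (proj1 ` S)) + int (\<rho>2 (proj2 ` S))" by (simp add: dval_def)
    then show "\<rho>2 Z2 < \<rho>2 (vec.span (insert y Z2))" using rZ gt m1 m2 by linarith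
  qed
  have c1: "qcyclic \<rho>1 Z1"
  proof -
    have "\<forall>x\<in>Z1. \<forall>W. vec.subspace W \<and> W \<subseteq> Z1 \<and> vec.span (insert x W) = Z1 \<longrightarrow> \<rho>1 W = \<rho>1 Z1"
    proof (intro ballI allI impI)
      fix x W assume x: "x \<in> Z1" and W: "vec.subspace W \<and> W \<subseteq> Z1 \<and> vec.span (insert x W) = Z1"
      define H where "H = (dsum_space W Z2 :: ('a^('n1+'n2)) set)"
      have sH: "vec.subspace H" unfolding H_def using subspace_dsum W sZ2 by blast
      have HZ: "H \<subseteq> Z" unfolding H_def Zeq using dsum_mono W by blast
      have wZ: "(emb1 x :: 'a^('n1+'n2)) \<in> Z" unfolding Zeq dsum_space_def using x vec.subspace_0[OF sZ2]
        by (intro CollectI exI[of _ x] exI[of _ 0]) simp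
      have spanH: "vec.span (insert (emb1 x) H) = Z"
      proof
        show "vec.span (insert (emb1 x) H) \<subseteq> Z" using HZ wZ sZ by (intro vec.span_minimal) auto
      next
        show "Z \<subseteq> vec.span (insert (emb1 x) H)"
        proof
          fix v assume "v \<in> Z"
          then obtain a b where v: "v = emb1 a + emb2 b" "a \<in> Z1" "b \<in> Z2"
            unfolding Zeq dsum_space_def by blast
          then have "a \<in> vec.span (insert x W)" using W by simp
          then have "a \<in> {c *s x + z | c z. z \<in> W}" using span_insert_sub[of W x] W by simp
          then obtain c w' where a: "a = c *s x + w'" "w' \<in> W" by blast
          have "emb1 w' + emb2 b \<in> H" unfolding H_def dsum_space_def using a v by blast
          then have h: "emb1 w' + emb2 b \<in> vec.span (insert (emb1 x) H)" by (auto intro: vec.span_base)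
          have e: "(emb1 x :: 'a^('n1+'n2)) \<in> vec.span (insert (emb1 x) H)" by (auto intro: vec.span_base)
          have "v = c *s emb1 x + (emb1 w' + emb2 b)" using v a by (simp add: add.assoc)
          then show "v \<in> vec.span (insert (emb1 x) H)" using h e by (simp add: vec.span_add vec.span_scale)
        qed
      qed
      have "emb1 x \<in> cyc ?\<rho> Z" using cy wZ by simp
      then have eq: "?\<rho> H = ?\<rho> Z" using spanH sH HZ unfolding cyc_def by blast
      have "int (?\<rho> H) \<le> dval \<rho>1 \<rho>2 H H" using DR_le[OF sH order_refl] .
      moreover have "proj1 ` H = W" unfolding H_def using proj1_dsum vec.subspace_0[OF sZ2] by blast
      moreover have "proj2 ` H = Z2" unfolding H_def using proj2_dsum W vec.subspace_0 by blast
      ultimately have "int (?\<rho> H) \<le> int (\<rho>1 W) + int (\<rho>2 Z2)" by (simp add: dval_def)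
      moreover have "\<rho>1 W \<le> \<rho>1 Z1" using qm_mono[OF qm1 _ qZ1] W Z1E1 by (auto simp: qsub_def)
      ultimately show "\<rho>1 W = \<rho>1 Z1" using eq rZ by linarith
    qed
    then show ?thesis unfolding qcyclic_def cyc_def by blast
  qed
  have c2: "qcyclic \<rho>2 Z2"
  proof -
    have "\<forall>x\<in>Z2. \<forall>W. vec.subspace W \<and> W \<subseteq> Z2 \<and> vec.span (insert x W) = Z2 \<longrightarrow> \<rho>2 W = \<rho>2 Z2"
    proof (intro ballI allI impI)
      fix x W assume x: "x \<in> Z2" and W: "vec.subspace W \<and> W \<subseteq> Z2 \<and> vec.span (insert x W) = Z2"
      define H where "H = (dsum_space Z1 W :: ('a^('n1+'n2)) set)"
      have sH: "vec.subspace H" unfolding H_def using subspace_dsum W sZ1 by blast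
      have HZ: "H \<subseteq> Z" unfolding H_def Zeq using dsum_mono W by blast
      have wZ: "(emb2 x :: 'a^('n1+'n2)) \<in> Z" unfolding Zeq dsum_space_def using x vec.subspace_0[OF sZ1]
        by (intro CollectI exI[of _ 0] exI[of _ x]) simp
      have spanH: "vec.span (insert (emb2 x) H) = Z"
      proof
        show "vec.span (insert (emb2 x) H) \<subseteq> Z" using HZ wZ sZ by (intro vec.span_minimal) auto
      next
        show "Z \<subseteq> vec.span (insert (emb2 x) H)"
        proof
          fix v assume "v \<in> Z"
          then obtain a b where v: "v = emb1 a + emb2 b" "a \<in> Z1" "b \<in> Z2"
            unfolding Zeq dsum_space_def by blast
          then have "b \<in> vec.span (insert x W)" using W by simp
          then have "b \<in> {c *s x + z | c z. z \<in> W}" using span_insert_sub[of W x] W by simp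
          then obtain c w' where b: "b = c *s x + w'" "w' \<in> W" by blast
          have "emb1 a + emb2 w' \<in> H" unfolding H_def dsum_space_def using b v by blast
          then have h: "emb1 a + emb2 w' \<in> vec.span (insert (emb2 x) H)" by (auto intro: vec.span_base)
          have e: "(emb2 x :: 'a^('n1+'n2)) \<in> vec.span (insert (emb2 x) H)" by (auto intro: vec.span_base)
          have "v = c *s emb2 x + (emb1 a + emb2 w')" using v b by (simp add: algebra_simps)
          then show "v \<in> vec.span (insert (emb2 x) H)" using h e by (simp add: vec.span_add vec.span_scale)
        qed
      qed
      have "emb2 x \<in> cyc ?\<rho> Z" using cy wZ by simp
      then have eq: "?\<rho> H = ?\<rho> Z" using spanH sH HZ unfolding cyc_def by blast
      have "int (?\<rho> H) \<le> dval \<rho>1 \<rho>2 H H" using DR_le[OF sH order_refl] .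
      moreover have "proj2 ` H = W" unfolding H_def using proj2_dsum vec.subspace_0[OF sZ1] by blast
      moreover have "proj1 ` H = Z1" unfolding H_def using proj1_dsum W vec.subspace_0 by blast
      ultimately have "int (?\<rho> H) \<le> int (\<rho>1 Z1) + int (\<rho>2 W)" by (simp add: dval_def)
      moreover have "\<rho>2 W \<le> \<rho>2 Z2" using qm_mono[OF qm2 _ qZ2] W Z2E2 by (auto simp: qsub_def)
      ultimately show "\<rho>2 W = \<rho>2 Z2" using eq rZ by linarith
    qed
    then show ?thesis unfolding qcyclic_def cyc_def by blast
  qed
  show ?thesis using Zeq f1 f2 c1 c2 unfolding cyclic_flats_def by blast
qed

lemma dir2:
  fixes E1 :: "('a::{field,finite} ^ 'n1) set" and E2 :: "('a ^ 'n2) set"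
    and \<rho>1 :: "('a ^ 'n1) set \<Rightarrow> nat" and \<rho>2 :: "('a ^ 'n2) set \<Rightarrow> nat"
  assumes qm1: "qmatroid E1 \<rho>1" and qm2: "qmatroid E2 \<rho>2"
    and Z1c: "Z1 \<in> cyclic_flats E1 \<rho>1" and Z2c: "Z2 \<in> cyclic_flats E2 \<rho>2"
  shows "(dsum_space Z1 Z2 :: ('a^('n1+'n2)) set) \<in> cyclic_flats (dsum_space E1 E2) (dsum_rank \<rho>1 \<rho>2)"
proof -
  let ?E = "dsum_space E1 E2 :: ('a^('n1+'n2)) set" and ?\<rho> = "dsum_rank \<rho>1 \<rho>2"
  let ?Z = "dsum_space Z1 Z2 :: ('a^('n1+'n2)) set"
  have sE1: "vec.subspace E1" using qm1 qm_subspace by blast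
  have sE2: "vec.subspace E2" using qm2 qm_subspace by blast
  have fl1: "qflat E1 \<rho>1 Z1" and cy1: "qcyclic \<rho>1 Z1" using Z1c unfolding cyclic_flats_def by auto
  have fl2: "qflat E2 \<rho>2 Z2" and cy2: "qcyclic \<rho>2 Z2" using Z2c unfolding cyclic_flats_def by auto
  have qZ1: "qsub E1 Z1" using fl1 by (simp add: qflat_def)
  have qZ2: "qsub E2 Z2" using fl2 by (simp add: qflat_def)
  have sZ1: "vec.subspace Z1" and Z1E1: "Z1 \<subseteq> E1" using qZ1 by (auto simp: qsub_def)
  have sZ2: "vec.subspace Z2" and Z2E2: "Z2 \<subseteq> E2" using qZ2 by (auto simp: qsub_def)
  have sZ: "vec.subspace ?Z" using subspace_dsum[OF sZ1 sZ2] .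
  have ZE: "?Z \<subseteq> ?E" using dsum_mono[OF Z1E1 Z2E2] .
  have p1Z: "proj1 ` ?Z = Z1" using proj1_dsum vec.subspace_0[OF sZ2] by blast
  have p2Z: "proj2 ` ?Z = Z2" using proj2_dsum vec.subspace_0[OF sZ1] by blast
  have p1E: "proj1 ` ?E = E1" using proj1_dsum vec.subspace_0[OF sE2] by blast
  have p2E: "proj2 ` ?E = E2" using proj2_dsum vec.subspace_0[OF sE1] by blast
  have dZ: "vec.dim ?Z = vec.dim Z1 + vec.dim Z2" using dim_dsum[OF sZ1 sZ2] .
  have rZ: "int (?\<rho> ?Z) = int (\<rho>1 Z1) + int (\<rho>2 Z2)"
  proof (rule antisym)
    show "int (?\<rho> ?Z) \<le> int (\<rho>1 Z1) + int (\<rho>2 Z2)"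
      using DR_le[OF sZ order_refl, of \<rho>1 \<rho>2] by (simp add: dval_def p1Z p2Z)
  next
    obtain X where X: "vec.subspace X" "X \<subseteq> ?Z" "int (?\<rho> ?Z) = dval \<rho>1 \<rho>2 ?Z X"
      using DR_att[OF sZ] by blast
    have A1: "proj1 ` X \<subseteq> Z1" using image_mono[OF X(2), of proj1] p1Z by simp
    have A2: "proj2 ` X \<subseteq> Z2" using image_mono[OF X(2), of proj2] p2Z by simp
    have r1: "\<rho>1 Z1 + vec.dim (proj1 ` X) \<le> \<rho>1 (proj1 ` X) + vec.dim Z1"
      using R1[OF qm1 qZ1 subspace_proj1[OF X(1)] A1] .
    have r2: "\<rho>2 Z2 + vec.dim (proj2 ` X) \<le> \<rho>2 (proj2 ` X) + vec.dim Z2"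
      using R1[OF qm2 qZ2 subspace_proj2[OF X(1)] A2] .
    have "vec.dim X \<le> vec.dim (proj1 ` X) + vec.dim (proj2 ` X)" using dim_le_proj[OF X(1)] .
    then show "int (\<rho>1 Z1) + int (\<rho>2 Z2) \<le> int (?\<rho> ?Z)"
      using X(3) r1 r2 dZ unfolding dval_def by linarith
  qed
  have qZ: "qsub ?E ?Z" using sZ ZE by (simp add: qsub_def)
  have flat: "qflat ?E ?\<rho> ?Z"
    unfolding qflat_def
  proof (intro conjI ballI)
    show "qsub ?E ?Z" by fact
    fix x assume x: "x \<in> ?E - ?Z"
    define S where "S = vec.span (insert x ?Z)"
    have sS: "vec.subspace S" unfolding S_def by (rule vec.subspace_span)
    obtain X where X: "vec.subspace X" "X \<subseteq> S" "int (?\<rho> S) = dval \<rho>1 \<rho>2 S X"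
      using DR_att[OF sS] by blast
    have x1: "proj1 x \<in> E1" using x p1E by blast
    have x2: "proj2 x \<in> E2" using x p2E by blast
    have A1: "proj1 ` X \<subseteq> vec.span (insert (proj1 x) Z1)"
      using image_mono[OF X(2), of proj1] proj1_span_insert[OF sZ, of x] p1Z unfolding S_def by simp
    have A2: "proj2 ` X \<subseteq> vec.span (insert (proj2 x) Z2)"
      using image_mono[OF X(2), of proj2] proj2_span_insert[OF sZ, of x] p2Z unfolding S_def by simp
    have qA1: "qsub E1 (proj1 ` X)"
      using subspace_proj1[OF X(1)] A1 qsub_span_insert[OF sE1 x1 Z1E1] by (auto simp: qsub_def)
    have qA2: "qsub E2 (proj2 ` X)"
      using subspace_proj2[OF X(1)] A2 qsub_span_insert[OF sE2 x2 Z2E2] by (auto simp: qsub_def)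
    have r1: "\<rho>1 Z1 + vec.dim (proj1 ` X) \<le> \<rho>1 (proj1 ` X) + vec.dim Z1"
      using R4[OF qm1 fl1 qA1 x1 A1] .
    have r2: "\<rho>2 Z2 + vec.dim (proj2 ` X) \<le> \<rho>2 (proj2 ` X) + vec.dim Z2"
      using R4[OF qm2 fl2 qA2 x2 A2] .
    have dS: "vec.dim S = vec.dim ?Z + 1" unfolding S_def using dim_span_insert[OF sZ] x by blast
    have "vec.dim X \<le> vec.dim (proj1 ` X) + vec.dim (proj2 ` X)" using dim_le_proj[OF X(1)] .
    then have "int (?\<rho> ?Z) < int (?\<rho> S)"
      using X(3) r1 r2 dZ dS rZ unfolding dval_def by linarith
    then show "?\<rho> ?Z < ?\<rho> (vec.span (insert x ?Z))" unfolding S_def by simp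
  qed
  have cyclic: "qcyclic ?\<rho> ?Z"
  proof -
    have "\<forall>x\<in>?Z. \<forall>W. vec.subspace W \<and> W \<subseteq> ?Z \<and> vec.span (insert x W) = ?Z \<longrightarrow> ?\<rho> W = ?\<rho> ?Z"
    proof (intro ballI allI impI)
      fix x W assume x: "x \<in> ?Z" and W: "vec.subspace W \<and> W \<subseteq> ?Z \<and> vec.span (insert x W) = ?Z"
      have sW: "vec.subspace W" and WZ: "W \<subseteq> ?Z" using W by auto
      show "?\<rho> W = ?\<rho> ?Z"
      proof (cases "x \<in> W")
        case True
        then have "vec.span (insert x W) = W" using sW by (simp add: insert_absorb)
        then have "W = ?Z" using W by simp
        then show ?thesis by simp
      next
        case False
        have dW: "vec.dim ?Z = vec.dim W + 1" using dim_span_insert[OF sW False] W by simp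
        have W1: "proj1 ` W \<subseteq> Z1" using image_mono[OF WZ, of proj1] p1Z by simp
        have W2: "proj2 ` W \<subseteq> Z2" using image_mono[OF WZ, of proj2] p2Z by simp
        have "int (?\<rho> W) \<le> dval \<rho>1 \<rho>2 W W" using DR_le[OF sW order_refl] .
        moreover have "\<rho>1 (proj1 ` W) \<le> \<rho>1 Z1"
          using qm_mono[OF qm1 _ qZ1 W1] subspace_proj1[OF sW] W1 Z1E1 by (auto simp: qsub_def)
        moreover have "\<rho>2 (proj2 ` W) \<le> \<rho>2 Z2"
          using qm_mono[OF qm2 _ qZ2 W2] subspace_proj2[OF sW] W2 Z2E2 by (auto simp: qsub_def)
        ultimately have up: "int (?\<rho> W) \<le> int (?\<rho> ?Z)" using rZ unfolding dval_def by linarith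
        obtain X where X: "vec.subspace X" "X \<subseteq> W" "int (?\<rho> W) = dval \<rho>1 \<rho>2 W X"
          using DR_att[OF sW] by blast
        have XZ: "X \<subseteq> ?Z" using X WZ by blast
        have A1: "proj1 ` X \<subseteq> Z1" using image_mono[OF XZ, of proj1] p1Z by simp
        have A2: "proj2 ` X \<subseteq> Z2" using image_mono[OF XZ, of proj2] p2Z by simp
        have sA1: "vec.subspace (proj1 ` X)" using subspace_proj1[OF X(1)] .
        have sA2: "vec.subspace (proj2 ` X)" using subspace_proj2[OF X(1)] .
        have r1: "\<rho>1 Z1 + vec.dim (proj1 ` X) \<le> \<rho>1 (proj1 ` X) + vec.dim Z1"
          using R1[OF qm1 qZ1 sA1 A1] .
        have r2: "\<rho>2 Z2 + vec.dim (proj2 ` X) \<le> \<rho>2 (proj2 ` X) + vec.dim Z2"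
          using R1[OF qm2 qZ2 sA2 A2] .
        have dX: "vec.dim X \<le> vec.dim (proj1 ` X) + vec.dim (proj2 ` X)" using dim_le_proj[OF X(1)] .
        have dXW: "vec.dim X \<le> vec.dim W" using vec.dim_subset[OF X(2)] .
        have low: "int (?\<rho> ?Z) \<le> int (?\<rho> W)"
        proof (cases "proj1 ` X = Z1 \<and> proj2 ` X = Z2")
          case True
          then show ?thesis using X(3) rZ dXW unfolding dval_def by simp
        next
          case False
          then have "proj1 ` X \<noteq> Z1 \<or> proj2 ` X \<noteq> Z2" by blast
          then show ?thesis
          proof (elim disjE)
            assume ne: "proj1 ` X \<noteq> Z1"
            have "\<rho>1 Z1 + vec.dim (proj1 ` X) + 1 \<le> \<rho>1 (proj1 ` X) + vec.dim Z1"
              using R3[OF qm1 qZ1 cy1 sA1 A1 ne] .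
            then show ?thesis using X(3) rZ r2 dX dW dZ unfolding dval_def by linarith
          next
            assume ne: "proj2 ` X \<noteq> Z2"
            have "\<rho>2 Z2 + vec.dim (proj2 ` X) + 1 \<le> \<rho>2 (proj2 ` X) + vec.dim Z2"
              using R3[OF qm2 qZ2 cy2 sA2 A2 ne] .
            then show ?thesis using X(3) rZ r1 dX dW dZ unfolding dval_def by linarith
          qed
        qed
        show ?thesis using up low by linarith
      qed
    qed
    then show ?thesis unfolding qcyclic_def cyc_def by blast
  qed
  show ?thesis using flat cyclic unfolding cyclic_flats_def by blast
qed

theorem theorem6p2:
  fixes E1 :: "('a::{field,finite} ^ 'n1) set" and E2 :: "('a ^ 'n2) set"
    and \<rho>1 :: "('a ^ 'n1) set \<Rightarrow> nat" and \<rho>2 :: "('a ^ 'n2) set \<Rightarrow> nat"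
  assumes "qmatroid E1 \<rho>1" and "qmatroid E2 \<rho>2"
  shows "cyclic_flats (dsum_space E1 E2) (dsum_rank \<rho>1 \<rho>2)
           = {dsum_space Z1 Z2 | Z1 Z2. Z1 \<in> cyclic_flats E1 \<rho>1 \<and> Z2 \<in> cyclic_flats E2 \<rho>2}"
  using dir1[OF assms] dir2[OF assms] by blast

end
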